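(* Let $E=(E_{m,n})_{m,n\in\mathbb N}$ be a nonnegative process adapted to a filtration sequence $\mathcal F$. The following are equivalent: (i) for every bounded integer sequence $r$, $E$ is an $r$-asymptotic e-process for $\mathcal P$ and $\mathcal F$; (ii) there exists an integer sequence $r=(r_m)_{m\in\mathbb N}$ with $r_m\to\infty$ as $m\to\infty$ such that $E$ is an $r$-asymptotic e-process for $\mathcal P$ and $\mathcal F$.
   Context: $(\Omega,\mathcal A)$ is a measurable space and $\mathcal P$ a set of probability measures on it. $\mathbb N=\{0,1,2,\dots\}$; an extended integer is an element of $\mathbb N\cup\{\infty\}$. Nonnegative random variables take values in $[0,\infty]$, and for such $X$, $\mathbb E_P[X]:=\infty$ if $X$ is not $P$-integrable. For a process $(X_n)$, $X_\infty:=\limsup_n X_n$. A filtration sequence is a family $\mathcal F=(\mathcal F_{m,n})_{m,n\in\mathbb N}$ of sub-$\sigma$-algebras of $\mathcal A$ such that for each $m$, $\mathcal F_{m,\bullet}$ is a filtration; $E$ is adapted if $E_{m,n}$ is $\mathcal F_{m,n}$-measurable. For a filtration $\mathcal G$ and $\rho\in\mathbb N\cup\{\infty\}$, $\mathcal T(\rho,\mathcal G,\mathcal P)$ is the set of $\mathcal G$-stopping times $\tau$ (values in $\mathbb N\cup\{\infty\}$) with $P[\tau\le\rho]=1$ for all $P\in\mathcal P$. For an extended integer sequence $r$, $\mathcal T(r,\mathcal F,\mathcal P)$ is the set of sequences $(\tau_m)$ with $\tau_m\in\mathcal T(r_m,\mathcal F_{m,\bullet},\mathcal P)$. A nonnegative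 adapted process $E$ is an $r$-asymptotic e-process (for $\mathcal P$ and $\mathcal F$) if for every $\tau\in\mathcal T(r,\mathcal F,\mathcal P)$, $\limsup_{m\to\infty}\sup_{P\in\mathcal P}\mathbb E_P[E_{m,\tau_m}]\le 1$. *)

theory Defs
  imports "HOL-Probability.Probability"
begin

definition filtration_seq :: "'a measure \<Rightarrow> (nat \<Rightarrow> nat \<Rightarrow> 'a measure) \<Rightarrow> bool" where
  "filtration_seq M F \<longleftrightarrow>
     (\<forall>m n. subalgebra M (F m n)) \<and>
     (\<forall>m n n'. n \<le> n' \<longrightarrow> sets (F m n) \<subseteq> sets (F m n'))"

definition adapted_seq :: "(nat \<Rightarrow> nat \<Rightarrow> 'a measure) \<Rightarrow> (nat \<Rightarrow> nat \<Rightarrow> 'a \<Rightarrow> ennreal) \<Rightarrow> bool" where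
  "adapted_seq F E \<longleftrightarrow> (\<forall>m n. E m n \<in> borel_measurable (F m n))"

definition stopping_time_enat :: "(nat \<Rightarrow> 'a measure) \<Rightarrow> ('a \<Rightarrow> enat) \<Rightarrow> bool" where
  "stopping_time_enat G \<tau> \<longleftrightarrow> (\<forall>n. {\<omega> \<in> space (G n). \<tau> \<omega> \<le> enat n} \<in> sets (G n))"

definition stopping_times_bounded ::
  "enat \<Rightarrow> (nat \<Rightarrow> 'a measure) \<Rightarrow> 'a measure set \<Rightarrow> ('a \<Rightarrow> enat) set" where
  "stopping_times_bounded \<rho> G \<P> =
     {\<tau>. stopping_time_enat G \<tau> \<and> (\<forall>P\<in>\<P>. emeasure P {\<omega> \<in> space P. \<tau> \<omega> \<le> \<rho>} = 1)}"

definition stopped_value :: "(nat \<Rightarrow> 'a \<Rightarrow> ennreal) \<Rightarrow> ('a \<Rightarrow> enat) \<Rightarrow> 'a \<Rightarrow> ennreal" where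
  "stopped_value X \<tau> \<omega> =
     (case \<tau> \<omega> of enat n \<Rightarrow> X n \<omega> | \<infinity> \<Rightarrow> limsup (\<lambda>n. X n \<omega>))"

text \<open>r-asymptotic e-process; expectations of [0,\<infinity>]-valued variables are
  nonnegative integrals (value \<infinity> when not integrable).\<close>
definition asymptotic_e_process ::
  "'a measure set \<Rightarrow> (nat \<Rightarrow> nat \<Rightarrow> 'a measure) \<Rightarrow> (nat \<Rightarrow> enat) \<Rightarrow> (nat \<Rightarrow> nat \<Rightarrow> 'a \<Rightarrow> ennreal) \<Rightarrow> bool" where
  "asymptotic_e_process \<P> F r E \<longleftrightarrow>
     (\<forall>\<tau>::nat \<Rightarrow> 'a \<Rightarrow> enat. (\<forall>m. \<tau> m \<in> stopping_times_bounded (r m) (F m) \<P>) \<longrightarrow>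
        limsup (\<lambda>m. SUP P\<in>\<P>. \<integral>\<^sup>+ \<omega>. stopped_value (E m) (\<tau> m) \<omega> \<partial>P) \<le> 1)"

end

theory Submission
  imports Defs
begin

lemma limsup_le1_D:
  assumes "limsup x \<le> (1::ennreal)" "0 < e"
  shows "eventually (\<lambda>m. x m < 1 + ennreal e) sequentially"
proof -
  have "(1::ennreal) < 1 + ennreal e" using assms(2) by simp
  then have "limsup x < 1 + ennreal e" using assms(1) by (rule le_less_trans[rotated])
  then show ?thesis by (rule Limsup_lessD)
qed

lemma limsup_le1_I:
  assumes "\<And>e. 0 < e \<Longrightarrow> eventually (\<lambda>m. x m \<le> 1 + ennreal e) sequentially"
  shows "limsup x \<le> (1::ennreal)"
proof (rule ennreal_le_epsilon)
  fix e :: real assume "0 < e"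
  then show "limsup x \<le> 1 + ennreal e" using assms by (intro Limsup_bounded) auto
qed

lemma zero_st:
  assumes "\<forall>P\<in>\<P>. prob_space P"
  shows "(\<lambda>_. 0) \<in> stopping_times_bounded (enat k) G \<P>"
  using assms unfolding stopping_times_bounded_def stopping_time_enat_def
  by (auto simp: prob_space.emeasure_space_1)

lemma st_mono:
  assumes P: "\<forall>P\<in>\<P>. prob_space P \<and> sets P = sets M"
    and F: "filtration_seq M F"
    and t: "\<tau> \<in> stopping_times_bounded (enat k) (F m) \<P>"
    and kk: "k \<le> k'"
  shows "\<tau> \<in> stopping_times_bounded (enat k') (F m) \<P>"
proof -
  have st: "stopping_time_enat (F m) \<tau>" using t unfolding stopping_times_bounded_def by auto
  have "emeasure P {\<omega> \<in> space P. \<tau> \<omega> \<le> enat k'} = 1" if PP: "P \<in> \<P>" for P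
  proof -
    have ps: "prob_space P" and sP: "sets P = sets M" using P PP by auto
    have sub: "subalgebra M (F m k')" using F unfolding filtration_seq_def by auto
    have spP: "space P = space M" using sP by (rule sets_eq_imp_space_eq)
    have "{\<omega> \<in> space (F m k'). \<tau> \<omega> \<le> enat k'} \<in> sets (F m k')"
      using st unfolding stopping_time_enat_def by auto
    then have meas: "{\<omega> \<in> space P. \<tau> \<omega> \<le> enat k'} \<in> sets P"
      using sub sP spP unfolding subalgebra_def by auto
    have "1 = emeasure P {\<omega> \<in> space P. \<tau> \<omega> \<le> enat k}"
      using t PP unfolding stopping_times_bounded_def by auto
    also have "\<dots> \<le> emeasure P {\<omega> \<in> space P. \<tau> \<omega> \<le> enat k'}"
      using kk meas by (intro emeasure_mono) (auto intro: order_trans)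
    finally have "1 \<le> emeasure P {\<omega> \<in> space P. \<tau> \<omega> \<le> enat k'}" .
    moreover have "emeasure P {\<omega> \<in> space P. \<tau> \<omega> \<le> enat k'} \<le> 1"
      using ps by (simp add: prob_space.measure_le_1 prob_space.emeasure_le_1)
    ultimately show ?thesis by (rule antisym[rotated])
  qed
  then show ?thesis using st unfolding stopping_times_bounded_def by auto
qed

theorem mainTheorem2:
  fixes M :: "'a measure" and \<P> :: "'a measure set"
    and F :: "nat \<Rightarrow> nat \<Rightarrow> 'a measure" and E :: "nat \<Rightarrow> nat \<Rightarrow> 'a \<Rightarrow> ennreal"
  assumes "\<forall>P\<in>\<P>. prob_space P \<and> sets P = sets M"
    and "filtration_seq M F"
    and "adapted_seq F E"
  shows "(\<forall>r::nat \<Rightarrow> nat. (\<exists>B. \<forall>m. r m \<le> B) \<longrightarrow> asymptotic_e_process \<P> F (\<lambda>m. enat (r m)) E)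
         \<longleftrightarrow> (\<exists>r::nat \<Rightarrow> nat. filterlim r at_top sequentially \<and> asymptotic_e_process \<P> F (\<lambda>m. enat (r m)) E)"
proof -
  define V where "V m \<tau> = (SUP P\<in>\<P>. \<integral>\<^sup>+ \<omega>. stopped_value (E m) \<tau> \<omega> \<partial>P)" for m \<tau>
  define T where "T k m = stopping_times_bounded (enat k) (F m) \<P>" for k m
  have ps: "\<forall>P\<in>\<P>. prob_space P" using assms(1) by auto
  have z: "(\<lambda>_. 0) \<in> T k m" for k m unfolding T_def by (rule zero_st[OF ps])
  have mono: "\<tau> \<in> T k m \<Longrightarrow> k \<le> k' \<Longrightarrow> \<tau> \<in> T k' m" for \<tau> k k' m
    unfolding T_def using st_mono[OF assms(1,2)] by blast
  have aep: "asymptotic_e_process \<P> F (\<lambda>m. enat (r m)) E \<longleftrightarrow>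
     (\<forall>\<tau>. (\<forall>m. \<tau> m \<in> T (r m) m) \<longrightarrow> limsup (\<lambda>m. V m (\<tau> m)) \<le> 1)" for r
    unfolding asymptotic_e_process_def V_def T_def by simp
  show ?thesis
  proof
    assume H: "\<forall>r::nat \<Rightarrow> nat. (\<exists>B. \<forall>m. r m \<le> B) \<longrightarrow> asymptotic_e_process \<P> F (\<lambda>m. enat (r m)) E"
    define a where "a k m = (SUP \<tau>\<in>T k m. V m \<tau>)" for k m
    have A: "eventually (\<lambda>m. a k m \<le> 1 + ennreal e) sequentially" if e: "0 < e" for k e
    proof (rule ccontr)
      assume "\<not> ?thesis"
      then have fr: "frequently (\<lambda>m. 1 + ennreal e < a k m) sequentially"
        by (simp add: not_eventually not_le)
      define \<sigma> where "\<sigma> m = (if \<exists>\<tau>\<in>T k m. 1 + ennreal e < V m \<tau>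
          then (SOME \<tau>. \<tau> \<in> T k m \<and> 1 + ennreal e < V m \<tau>) else (\<lambda>_. 0))" for m
      have \<sigma>T: "\<sigma> m \<in> T k m" for m
      proof (cases "\<exists>\<tau>\<in>T k m. 1 + ennreal e < V m \<tau>")
        case True
        then have "\<exists>\<tau>. \<tau> \<in> T k m \<and> 1 + ennreal e < V m \<tau>" by blast
        then have "(SOME \<tau>. \<tau> \<in> T k m \<and> 1 + ennreal e < V m \<tau>) \<in> T k m"
          by (rule someI2_ex) blast
        then show ?thesis using True unfolding \<sigma>_def by simp
      next
        case False
        then show ?thesis using z unfolding \<sigma>_def by simp
      qed
      have bd: "\<exists>B. \<forall>m. (\<lambda>_::nat. k) m \<le> B" by blast
      have "asymptotic_e_process \<P> F (\<lambda>m. enat ((\<lambda>_. k) m)) E"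
        using H[rule_format, OF bd] .
      then have "\<forall>\<tau>. (\<forall>m. \<tau> m \<in> T k m) \<longrightarrow> limsup (\<lambda>m. V m (\<tau> m)) \<le> 1"
        by (subst (asm) aep) simp
      then have "limsup (\<lambda>m. V m (\<sigma> m)) \<le> 1" using \<sigma>T by blast
      then have ev: "eventually (\<lambda>m. V m (\<sigma> m) < 1 + ennreal e) sequentially"
        using e by (rule limsup_le1_D)
      have "frequently (\<lambda>m. 1 + ennreal e < V m (\<sigma> m)) sequentially"
        using fr
      proof (rule frequently_elim1)
        fix m assume "1 + ennreal e < a k m"
        then have ex: "\<exists>\<tau>\<in>T k m. 1 + ennreal e < V m \<tau>"
          unfolding a_def by (simp add: less_SUP_iff)
        then show "1 + ennreal e < V m (\<sigma> m)"
        proof -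
          have "\<exists>\<tau>. \<tau> \<in> T k m \<and> 1 + ennreal e < V m \<tau>" using ex by blast
          then have "1 + ennreal e < V m (SOME \<tau>. \<tau> \<in> T k m \<and> 1 + ennreal e < V m \<tau>)"
            by (rule someI2_ex) blast
          then show ?thesis using ex unfolding \<sigma>_def by simp
        qed
      qed
      from frequently_eventually_frequently[OF this ev]
      have "frequently (\<lambda>m. False) sequentially"
        by (rule frequently_elim1) auto
      then show False by simp
    qed
    have "\<exists>N. \<forall>m\<ge>N. a k m \<le> 1 + ennreal (1 / Suc k)" for k
      using A[of "1 / Suc k" k] by (simp add: eventually_sequentially)
    then obtain N0 where N0: "\<And>k m. m \<ge> N0 k \<Longrightarrow> a k m \<le> 1 + ennreal (1 / Suc k)"
      by metis
    define N where "N k = N0 k + k" for k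
    define r where "r m = Max ({0} \<union> {k. k \<le> m \<and> N k \<le> m})" for m
    have fin: "finite ({0} \<union> {k. k \<le> m \<and> N k \<le> m})" for m by auto
    have rge: "k \<le> r m" if "N k \<le> m" for k m
      unfolding r_def using that fin by (intro Max_ge) (auto simp: N_def)
    have rin: "N (r m) \<le> m" if "N 0 \<le> m" for m
    proof -
      have "r m \<in> {0} \<union> {k. k \<le> m \<and> N k \<le> m}" unfolding r_def using fin
        by (intro Max_in) auto
      then show ?thesis using that by auto
    qed
    have lim: "filterlim r at_top sequentially"
      unfolding filterlim_at_top eventually_sequentially using rge by blast
    have "asymptotic_e_process \<P> F (\<lambda>m. enat (r m)) E"
      unfolding aep
    proof (intro allI impI limsup_le1_I)
      fix \<tau> :: "nat \<Rightarrow> 'a \<Rightarrow> enat" and e :: real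
      assume \<tau>: "\<forall>m. \<tau> m \<in> T (r m) m" and e: "0 < e"
      obtain K :: nat where K: "1 / Suc K < e"
        using e by (metis nat_approx_posE)
      show "eventually (\<lambda>m. V m (\<tau> m) \<le> 1 + ennreal e) sequentially"
        unfolding eventually_sequentially
      proof (intro exI allI impI)
        fix m assume m: "N 0 + N K \<le> m"
        have "V m (\<tau> m) \<le> a (r m) m" unfolding a_def using \<tau> by (auto intro: SUP_upper)
        also have "\<dots> \<le> 1 + ennreal (1 / Suc (r m))"
          using rin[of m] m by (intro N0) (auto simp: N_def)
        also have "\<dots> \<le> 1 + ennreal e"
        proof -
          have "K \<le> r m" using rge[of K m] m by auto
          then have "1 / Suc (r m) \<le> 1 / (Suc K :: real)"
            by (intro divide_left_mono) auto
          then show ?thesis using K by (intro add_left_mono ennreal_leI) auto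
        qed
        finally show "V m (\<tau> m) \<le> 1 + ennreal e" .
      qed
    qed
    with lim show "\<exists>r::nat \<Rightarrow> nat. filterlim r at_top sequentially \<and> asymptotic_e_process \<P> F (\<lambda>m. enat (r m)) E"
      by blast
  next
    assume "\<exists>r::nat \<Rightarrow> nat. filterlim r at_top sequentially \<and> asymptotic_e_process \<P> F (\<lambda>m. enat (r m)) E"
    then obtain r :: "nat \<Rightarrow> nat" where lim: "filterlim r at_top sequentially"
      and ae: "asymptotic_e_process \<P> F (\<lambda>m. enat (r m)) E" by blast
    show "\<forall>s::nat \<Rightarrow> nat. (\<exists>B. \<forall>m. s m \<le> B) \<longrightarrow> asymptotic_e_process \<P> F (\<lambda>m. enat (s m)) E"
    proof (intro allI impI)
      fix s :: "nat \<Rightarrow> nat" assume "\<exists>B. \<forall>m. s m \<le> B"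
      then obtain B where B: "\<And>m. s m \<le> B" by blast
      show "asymptotic_e_process \<P> F (\<lambda>m. enat (s m)) E"
        unfolding aep
      proof (intro allI impI)
        fix \<tau> :: "nat \<Rightarrow> 'a \<Rightarrow> enat" assume \<tau>: "\<forall>m. \<tau> m \<in> T (s m) m"
        define \<tau>' where "\<tau>' m = (if B \<le> r m then \<tau> m else (\<lambda>_. 0))" for m
        have "\<tau>' m \<in> T (r m) m" for m
        proof (cases "B \<le> r m")
          case True
          have "s m \<le> r m" using B[of m] True by linarith
          then have "\<tau> m \<in> T (r m) m" using mono \<tau> by blast
          then show ?thesis unfolding \<tau>'_def using True by simp
        next
          case False
          then show ?thesis unfolding \<tau>'_def using z by simp
        qed
        then have "limsup (\<lambda>m. V m (\<tau>' m)) \<le> 1" using ae aep by blast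
        moreover have "eventually (\<lambda>m. V m (\<tau>' m) = V m (\<tau> m)) sequentially"
          using lim unfolding filterlim_at_top by (rule allE[of _ B]) (auto simp: \<tau>'_def elim: eventually_mono)
        ultimately show "limsup (\<lambda>m. V m (\<tau> m)) \<le> 1"
          using Limsup_eq by metis
      qed
    qed
  qed
qed

end
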